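(* As formal power series, \[ B^{(\mathrm{pk},\mathrm{des})}\Big(xt,\,y,\,\tfrac1t\Big)\,B^{(\mathrm{pk},\mathrm{des})}(x,y,t)=(1+t)\,P^{(\mathrm{pk},\mathrm{des})}(x,y,t)-t. \]
   Context: For a permutation $\pi=\pi_1\cdots\pi_n$ of $[n]$, $\operatorname{des}(\pi)$ is the number of $1\le i\le n-1$ with $\pi_i>\pi_{i+1}$, $\operatorname{asc}(\pi)$ the number with $\pi_i<\pi_{i+1}$, and $\operatorname{pk}(\pi)$ the number of $2\le i\le n-1$ with $\pi_{i-1}<\pi_i>\pi_{i+1}$. A ballot permutation is one with $\operatorname{asc}(\pi_1\cdots\pi_i)\ge\operatorname{des}(\pi_1\cdots\pi_i)$ for all $i$; $\mathscr B_n$ is the set of ballot permutations of $[n]$, $\mathscr B_0=\mathcal S_0=\{\epsilon\}$ (empty permutation, with all statistics $0$). Define $P^{(\mathrm{pk},\mathrm{des})}(x,y,t)=\sum_{n\ge0}\sum_{\pi\in\mathcal S_n} y^{\operatorname{pk}(\pi)}t^{\operatorname{des}(\pi)}\frac{x^n}{n!}$ and $B^{(\mathrm{pk},\mathrm{des})}(x,y,t)=\sum_{n\ge0}\sum_{\pi\in\mathscr B_n} y^{\operatorname{pk}(\pi)}t^{\operatorname{des}(\pi)}\frac{x^n}{n!}$. *)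

theory Defs
  imports "HOL-Combinatorics.Multiset_Permutations" "HOL-Computational_Algebra.Formal_Power_Series"
begin

text \<open>Permutations of [n] are represented as lists (one-line notation) in
  permutations_of_set {1..n}; list positions are 0-based.\<close>

definition des :: "nat list \<Rightarrow> nat" where
  "des p = card {i. i + 1 < length p \<and> p ! i > p ! (i + 1)}"

definition asc :: "nat list \<Rightarrow> nat" where
  "asc p = card {i. i + 1 < length p \<and> p ! i < p ! (i + 1)}"

definition pk :: "nat list \<Rightarrow> nat" where
  "pk p = card {i. 0 < i \<and> i + 1 < length p \<and> p ! (i - 1) < p ! i \<and> p ! i > p ! (i + 1)}"

definition ballot :: "nat list \<Rightarrow> bool" where
  "ballot p \<longleftrightarrow> (\<forall>i\<le>length p. asc (take i p) \<ge> des (take i p))"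

definition ballot_perms :: "nat \<Rightarrow> nat list set" where
  "ballot_perms n = {p \<in> permutations_of_set {1..n}. ballot p}"

definition Pgf :: "real \<Rightarrow> real \<Rightarrow> real fps" where
  "Pgf y t = Abs_fps (\<lambda>n. (\<Sum>p\<in>permutations_of_set {1..n}. y ^ pk p * t ^ des p) / fact n)"

definition Bgf :: "real \<Rightarrow> real \<Rightarrow> real fps" where
  "Bgf y t = Abs_fps (\<lambda>n. (\<Sum>p\<in>ballot_perms n. y ^ pk p * t ^ des p) / fact n)"

end

theory Submission
  imports Defs
begin


definition stp :: "nat list \<Rightarrow> nat \<Rightarrow> int" where
  "stp p k = (if p!k < p!(k+1) then 1 else if p!(k+1) < p!k then -1 else 0)"

definition H :: "nat list \<Rightarrow> nat \<Rightarrow> int" where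
  "H p i = (\<Sum>k<i. stp p k)"

lemma H_0[simp]: "H p 0 = 0" by (simp add: H_def)
lemma H_Suc: "H p (Suc i) = H p i + stp p i" by (simp add: H_def)

lemma card_sum: "card {k. k < (m::nat) \<and> P k} = (\<Sum>k<m. if P k then 1 else 0)"
proof (induction m)
  case 0 then show ?case by simp
next
  case (Suc m)
  have "{k. k < Suc m \<and> P k} = {k. k < m \<and> P k} \<union> (if P m then {m} else {})"
    by (auto simp: less_Suc_eq)
  then show ?case using Suc by (simp add: card_insert_if)
qed

lemma asc_take: "i \<le> length p \<Longrightarrow> asc (take i p) = card {k. k < i - 1 \<and> p!k < p!(k+1)}"
  unfolding asc_def by (rule arg_cong[where f=card]) auto

lemma des_take: "i \<le> length p \<Longrightarrow> des (take i p) = card {k. k < i - 1 \<and> p!(k+1) < p!k}"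
  unfolding des_def by (rule arg_cong[where f=card]) auto

lemma asc_des_H: "int (card {k. k < m \<and> p!k < p!(k+1)}) - int (card {k. k < m \<and> p!(k+1) < p!k}) = H p m"
  unfolding card_sum H_def stp_def of_nat_sum sum_subtractf[symmetric]
  by (rule sum.cong) auto

lemma ballot_iff_H: "ballot p \<longleftrightarrow> (\<forall>i<length p. 0 \<le> H p i)"
proof -
  have "des (take i p) \<le> asc (take i p) \<longleftrightarrow> (i = 0 \<or> 0 \<le> H p (i - 1))" if "i \<le> length p" for i
    using asc_des_H[of "i - 1" p] asc_take[OF that] des_take[OF that]
    by (cases "i = 0") (auto simp: asc_def des_def)
  then have "ballot p \<longleftrightarrow> (\<forall>i\<le>length p. i = 0 \<or> 0 \<le> H p (i - 1))"
    unfolding ballot_def by auto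
  also have "\<dots> \<longleftrightarrow> (\<forall>i<length p. 0 \<le> H p i)"
  proof
    assume a: "\<forall>i\<le>length p. i = 0 \<or> 0 \<le> H p (i - 1)"
    show "\<forall>i<length p. 0 \<le> H p i"
    proof (intro allI impI)
      fix i assume "i < length p" then show "0 \<le> H p i" using a[rule_format, of "Suc i"] by simp
    qed
  next
    assume a: "\<forall>i<length p. 0 \<le> H p i"
    show "\<forall>i\<le>length p. i = 0 \<or> 0 \<le> H p (i - 1)"
      using a by (metis Suc_le_eq Suc_pred' neq0_conv)
  qed
  finally show ?thesis .
qed

lemma H_drop: "j + i < length p \<Longrightarrow> H (drop j p) i = H p (j + i) - H p j"
proof (induction i)
  case 0 then show ?case by simp
next
  case (Suc i)
  then show ?case by (simp add: H_Suc stp_def add.commute add.left_commute)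
qed

lemma H_rev: "j \<le> length p \<Longrightarrow> m < j \<Longrightarrow> H (rev (take j p)) m = H p (j - 1 - m) - H p (j - 1)"
proof (induction m)
  case 0 then show ?case by simp
next
  case (Suc m)
  have e: "j - 1 - m = Suc (j - 1 - Suc m)" using Suc.prems by simp
  have e2: "Suc (j - Suc (Suc m)) = j - Suc m" using Suc.prems by simp
  have "stp (rev (take j p)) m = - stp p (j - 1 - Suc m)"
    using Suc.prems by (auto simp: stp_def rev_nth e e2)
  then show ?case using Suc H_Suc[of p "j - Suc (Suc m)", unfolded e2] by (simp add: H_Suc)
qed

lemma stp_distinct: "distinct p \<Longrightarrow> k + 1 < length p \<Longrightarrow> stp p k = 1 \<or> stp p k = -1"
  using nth_eq_iff_index_eq[of p k "k+1"] by (auto simp: stp_def)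

lemma ballot_drop: "j < length p \<Longrightarrow> ballot (drop j p) \<longleftrightarrow> (\<forall>i. j \<le> i \<and> i < length p \<longrightarrow> H p j \<le> H p i)"
proof -
  assume j: "j < length p"
  have "ballot (drop j p) \<longleftrightarrow> (\<forall>i<length p - j. 0 \<le> H p (j + i) - H p j)"
    unfolding ballot_iff_H by (auto simp: H_drop)
  also have "\<dots> \<longleftrightarrow> (\<forall>i. j \<le> i \<and> i < length p \<longrightarrow> H p j \<le> H p i)"
  proof
    assume a: "\<forall>i<length p - j. 0 \<le> H p (j + i) - H p j"
    show "\<forall>i. j \<le> i \<and> i < length p \<longrightarrow> H p j \<le> H p i"
    proof (intro allI impI)
      fix i assume i: "j \<le> i \<and> i < length p"
      then have "i - j < length p - j" by linarith
      then show "H p j \<le> H p i" using a[rule_format, of "i - j"] i by simp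
    qed
  next
    assume a: "\<forall>i. j \<le> i \<and> i < length p \<longrightarrow> H p j \<le> H p i"
    show "\<forall>i<length p - j. 0 \<le> H p (j + i) - H p j"
      using a by auto
  qed
  finally show ?thesis .
qed

lemma ballot_rev_take: "j \<le> length p \<Longrightarrow> ballot (rev (take j p)) \<longleftrightarrow> (\<forall>i<j. H p (j - 1) \<le> H p i)"
proof -
  assume j: "j \<le> length p"
  have "ballot (rev (take j p)) \<longleftrightarrow> (\<forall>m<j. 0 \<le> H p (j - 1 - m) - H p (j - 1))"
  proof -
    have len: "length (rev (take j p)) = j" using j by simp
    have "ballot (rev (take j p)) \<longleftrightarrow> (\<forall>m<j. 0 \<le> H (rev (take j p)) m)"
      unfolding ballot_iff_H len ..
    also have "\<dots> \<longleftrightarrow> (\<forall>m<j. 0 \<le> H p (j - 1 - m) - H p (j - 1))"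
      using H_rev[OF j] by simp
    finally show ?thesis .
  qed
  also have "\<dots> \<longleftrightarrow> (\<forall>i<j. H p (j - 1) \<le> H p i)"
  proof
    assume a: "\<forall>m<j. 0 \<le> H p (j - 1 - m) - H p (j - 1)"
    show "\<forall>i<j. H p (j - 1) \<le> H p i"
    proof (intro allI impI)
      fix i assume "i < j" then show "H p (j - 1) \<le> H p i" using a[rule_format, of "j - 1 - i"] by simp
    qed
  next
    assume a: "\<forall>i<j. H p (j - 1) \<le> H p i"
    show "\<forall>m<j. 0 \<le> H p (j - 1 - m) - H p (j - 1)"
      using a by auto
  qed
  finally show ?thesis .
qed

fun desr :: "nat list \<Rightarrow> nat" where
  "desr (x # y # zs) = (if y < x then 1 else 0) + desr (y # zs)"
| "desr _ = 0"

fun ascr :: "nat list \<Rightarrow> nat" where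
  "ascr (x # y # zs) = (if x < y then 1 else 0) + ascr (y # zs)"
| "ascr _ = 0"

fun pkr :: "nat list \<Rightarrow> nat" where
  "pkr (x # y # z # ws) = (if x < y \<and> z < y then 1 else 0) + pkr (y # z # ws)"
| "pkr _ = 0"

lemma des_sum: "des p = (\<Sum>k<length p - 1. if p!(k+1) < p!k then 1 else 0)"
proof -
  have "des p = card {k. k < length p - 1 \<and> p!(k+1) < p!k}"
    unfolding des_def by (rule arg_cong[where f=card]) auto
  then show ?thesis by (simp add: card_sum)
qed

lemma asc_sum: "asc p = (\<Sum>k<length p - 1. if p!k < p!(k+1) then 1 else 0)"
proof -
  have "asc p = card {k. k < length p - 1 \<and> p!k < p!(k+1)}"
    unfolding asc_def by (rule arg_cong[where f=card]) auto
  then show ?thesis by (simp add: card_sum)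
qed

lemma pk_sum: "pk p = (\<Sum>k<length p - 2. if p!k < p!(k+1) \<and> p!(k+2) < p!(k+1) then 1 else 0)"
proof -
  have "{i. 0 < i \<and> i + 1 < length p \<and> p ! (i - 1) < p ! i \<and> p ! i > p ! (i + 1)}
      = Suc ` {k. k < length p - 2 \<and> p!k < p!(k+1) \<and> p!(k+2) < p!(k+1)}"
  proof (rule set_eqI, rule iffI)
    fix x assume "x \<in> {i. 0 < i \<and> i + 1 < length p \<and> p ! (i - 1) < p ! i \<and> p ! i > p ! (i + 1)}"
    then show "x \<in> Suc ` {k. k < length p - 2 \<and> p!k < p!(k+1) \<and> p!(k+2) < p!(k+1)}"
      by (intro image_eqI[of _ _ "x - 1"]) auto
  qed auto
  then have "pk p = card {k. k < length p - 2 \<and> p!k < p!(k+1) \<and> p!(k+2) < p!(k+1)}"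
    unfolding pk_def by (simp add: card_image)
  then show ?thesis by (simp add: card_sum)
qed

lemma des_eq: "des p = desr p"
proof (induction p rule: desr.induct)
  case (1 x y zs)
  have "des (x#y#zs) = (\<Sum>k<Suc (length zs). if (x#y#zs)!(k+1) < (x#y#zs)!k then 1 else 0)"
    by (simp add: des_sum del: sum.lessThan_Suc)
  also have "\<dots> = (if y < x then 1 else 0) + des (y#zs)"
    unfolding sum.lessThan_Suc_shift by (simp add: des_sum del: sum.lessThan_Suc)
  finally show ?case using 1 by simp
qed (auto simp: des_def)

lemma asc_eq: "asc p = ascr p"
proof (induction p rule: ascr.induct)
  case (1 x y zs)
  have "asc (x#y#zs) = (\<Sum>k<Suc (length zs). if (x#y#zs)!k < (x#y#zs)!(k+1) then 1 else 0)"
    by (simp add: asc_sum del: sum.lessThan_Suc)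
  also have "\<dots> = (if x < y then 1 else 0) + asc (y#zs)"
    unfolding sum.lessThan_Suc_shift by (simp add: asc_sum del: sum.lessThan_Suc)
  finally show ?case using 1 by simp
qed (auto simp: asc_def)

lemma pk_eq: "pk p = pkr p"
proof (induction p rule: pkr.induct)
  case (1 x y z ws)
  have "pk (x#y#z#ws) = (\<Sum>k<Suc (length ws). if (x#y#z#ws)!k < (x#y#z#ws)!(k+1) \<and> (x#y#z#ws)!(k+2) < (x#y#z#ws)!(k+1) then 1 else 0)"
    by (simp add: pk_sum del: sum.lessThan_Suc)
  also have "\<dots> = (if x < y \<and> z < y then 1 else 0) + pk (y#z#ws)"
    unfolding sum.lessThan_Suc_shift by (simp add: pk_sum del: sum.lessThan_Suc)
  finally show ?case using 1 by simp
qed (auto simp: pk_def)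

lemma ordiso_des: "\<forall>a\<in>set q. \<forall>b\<in>set q. (g a < g b \<longleftrightarrow> a < b) \<Longrightarrow> des (map g q) = des q"
  unfolding des_def by (rule arg_cong[where f=card]) (auto simp: nth_map)

lemma ordiso_asc: "\<forall>a\<in>set q. \<forall>b\<in>set q. (g a < g b \<longleftrightarrow> a < b) \<Longrightarrow> asc (map g q) = asc q"
  unfolding asc_def by (rule arg_cong[where f=card]) (auto simp: nth_map)

lemma ordiso_pk: "\<forall>a\<in>set q. \<forall>b\<in>set q. (g a < g b \<longleftrightarrow> a < b) \<Longrightarrow> pk (map g q) = pk q"
  unfolding pk_def by (rule arg_cong[where f=card]) (auto simp: nth_map)

lemma ordiso_ballot: "\<forall>a\<in>set q. \<forall>b\<in>set q. (g a < g b \<longleftrightarrow> a < b) \<Longrightarrow> ballot (map g q) = ballot q"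
proof -
  assume a: "\<forall>a\<in>set q. \<forall>b\<in>set q. (g a < g b \<longleftrightarrow> a < b)"
  have "\<forall>a\<in>set (take i q). \<forall>b\<in>set (take i q). (g a < g b \<longleftrightarrow> a < b)" for i
    using a set_take_subset[of i q] by blast
  then show ?thesis unfolding ballot_def
    by (simp add: take_map ordiso_des ordiso_asc)
qed

lemma desr_Cons: "desr (x # xs) = (if xs \<noteq> [] \<and> hd xs < x then 1 else 0) + desr xs"
  by (cases xs) auto

lemma ascr_Cons: "ascr (x # xs) = (if xs \<noteq> [] \<and> x < hd xs then 1 else 0) + ascr xs"
  by (cases xs) auto

lemma pkr_Cons: "pkr (x # xs) = (if 2 \<le> length xs \<and> x < xs!0 \<and> xs!1 < xs!0 then 1 else 0) + pkr xs"
  by (cases xs rule: pkr.cases) auto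

lemma desr_append: "desr (xs @ ys) = desr xs + desr ys + (if xs \<noteq> [] \<and> ys \<noteq> [] \<and> hd ys < last xs then 1 else 0)"
  by (induction xs) (auto simp: desr_Cons hd_append)

lemma ascr_append: "ascr (xs @ ys) = ascr xs + ascr ys + (if xs \<noteq> [] \<and> ys \<noteq> [] \<and> last xs < hd ys then 1 else 0)"
  by (induction xs) (auto simp: ascr_Cons hd_append)

lemma desr_rev: "desr (rev xs) = ascr xs"
  by (induction xs) (auto simp: desr_append ascr_Cons last_rev)

lemma pkr_snoc: "pkr (xs @ [x]) = pkr xs + (if 2 \<le> length xs \<and> xs!(length xs - 2) < last xs \<and> x < last xs then 1 else 0)"
proof (induction xs rule: pkr.induct)
  case (1 a b c ws)
  then show ?case by (auto simp: nth_append last_conv_nth)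
next
  case ("2_3" a b)
  then show ?case by auto
qed auto

lemma pkr_rev: "pkr (rev xs) = pkr xs"
proof (induction xs)
  case (Cons x xs)
  have a: "pkr (rev (x#xs)) = pkr (rev xs) + (if 2 \<le> length xs \<and> (rev xs)!(length xs - 2) < last (rev xs) \<and> x < last (rev xs) then 1 else 0)"
    using pkr_snoc[of "rev xs" x] by simp
  have b: "2 \<le> length xs \<Longrightarrow> (rev xs)!(length xs - 2) = xs!1" by (simp add: rev_nth)
  have c: "xs \<noteq> [] \<Longrightarrow> last (rev xs) = xs!0" by (simp add: last_rev hd_conv_nth)
  show ?case
  proof (cases "2 \<le> length xs")
    case True
    then have "xs \<noteq> []" by auto
    then show ?thesis using Cons.IH a b[OF True] c True by (simp add: pkr_Cons)
  next
    case False
    then show ?thesis using Cons.IH a by (simp add: pkr_Cons)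
  qed
qed simp

lemma pkr_append: "pkr (xs @ ys) = pkr xs + pkr ys
   + (if 2 \<le> length xs \<and> ys \<noteq> [] \<and> xs!(length xs - 2) < last xs \<and> hd ys < last xs then 1 else 0)
   + (if xs \<noteq> [] \<and> 2 \<le> length ys \<and> last xs < hd ys \<and> ys!1 < hd ys then 1 else 0)"
proof (induction xs)
  case Nil then show ?case by simp
next
  case (Cons x xs)
  show ?case using Cons.IH by (cases xs rule: pkr.cases; cases ys rule: pkr.cases) (auto simp: pkr_Cons nth_append)
qed

lemma ascr_desr: "distinct xs \<Longrightarrow> ascr xs + desr xs + 1 = length xs \<or> xs = []"
  by (induction xs rule: desr.induct) auto

definition Bal :: "nat set \<Rightarrow> nat list set" where
  "Bal S = {p \<in> permutations_of_set S. ballot p}"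

lemma finite_Bal[simp]: "finite (Bal S)"
  unfolding Bal_def by simp

lemma relabel:
  assumes fin: "finite S"
  shows "(\<Sum>p\<in>Bal S. F (pk p) (des p)) = (\<Sum>p\<in>ballot_perms (card S). F (pk p) (des p))"
proof -
  define xs where "xs = sorted_list_of_set S"
  define k where "k = card S"
  define g where "g i = xs ! (i - 1)" for i
  have len: "length xs = k" unfolding xs_def k_def by simp
  have setxs: "set xs = S" unfolding xs_def using fin by simp
  have ss: "sorted_wrt (<) xs" unfolding xs_def by simp
  have ord: "g a < g b \<longleftrightarrow> a < b" if "a \<in> {1..k}" "b \<in> {1..k}" for a b
  proof
    assume "a < b" then show "g a < g b"
      unfolding g_def using that len sorted_wrt_nth_less[OF ss, of "a - 1" "b - 1"] by auto
  next
    assume "g a < g b"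
    show "a < b"
    proof (rule ccontr)
      assume "\<not> a < b"
      then have "b < a \<or> a = b" by auto
      then show False
      proof
        assume "b < a"
        then have "g b < g a"
          unfolding g_def using that len sorted_wrt_nth_less[OF ss, of "b - 1" "a - 1"] by auto
        then show False using \<open>g a < g b\<close> by simp
      qed (use \<open>g a < g b\<close> in simp)
    qed
  qed
  have inj: "inj_on g {1..k}"
    by (rule inj_onI) (metis ord less_irrefl linorder_neqE_nat)
  have img: "g ` {1..k} = S"
  proof
    show "g ` {1..k} \<subseteq> S" unfolding g_def using len setxs by (auto intro!: nth_mem)
  next
    show "S \<subseteq> g ` {1..k}"
    proof
      fix x assume "x \<in> S"
      then obtain i where i: "i < length xs" "xs ! i = x" using setxs by (auto simp: in_set_conv_nth)
      then show "x \<in> g ` {1..k}" unfolding g_def using len by (intro image_eqI[of _ _ "Suc i"]) auto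
    qed
  qed
  have ordq: "\<forall>a\<in>set q. \<forall>b\<in>set q. (g a < g b \<longleftrightarrow> a < b)" if "q \<in> permutations_of_set {1..k}" for q
    using that ord by (auto simp: permutations_of_set_def)
  have BalS: "Bal S = map g ` ballot_perms k"
  proof -
    have "permutations_of_set S = map g ` permutations_of_set {1..k}"
      using permutations_of_set_image_inj[OF inj] img by simp
    then show ?thesis
      unfolding Bal_def ballot_perms_def using ordiso_ballot[OF ordq] by auto
  qed
  have injm: "inj_on (map g) (ballot_perms k)"
  proof (rule inj_onI)
    fix p q assume "p \<in> ballot_perms k" "q \<in> ballot_perms k" "map g p = map g q"
    then show "p = q"
      using map_inj_on[of g p q] inj_on_subset[OF inj, of "set p \<union> set q"]
      by (auto simp: ballot_perms_def permutations_of_set_def)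
  qed
  have "(\<Sum>p\<in>Bal S. F (pk p) (des p)) = (\<Sum>q\<in>ballot_perms k. F (pk (map g q)) (des (map g q)))"
    unfolding BalS by (simp add: sum.reindex[OF injm])
  also have "\<dots> = (\<Sum>q\<in>ballot_perms k. F (pk q) (des q))"
    by (rule sum.cong) (auto simp: ordiso_pk ordiso_des ordq ballot_perms_def)
  finally show ?thesis unfolding k_def .
qed

lemma sum_Pow_card:
  "(\<Sum>S\<in>Pow {1..n::nat}. F (card S)) = (\<Sum>k\<le>n. of_nat (n choose k) * (F k :: real))"
proof -
  have "(\<Sum>S\<in>Pow {1..n::nat}. F (card S)) = (\<Sum>k\<le>n. \<Sum>S\<in>{S. S \<in> Pow {1..n} \<and> card S = k}. F (card S))"
    by (rule sum.group[symmetric]) (auto simp: card_mono[of "{1..n}", simplified])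
  also have "\<dots> = (\<Sum>k\<le>n. of_nat (n choose k) * F k)"
  proof (rule sum.cong)
    fix k assume "k \<in> {..n}"
    have "(\<Sum>S\<in>{S. S \<in> Pow {1..n} \<and> card S = k}. F (card S)) = (\<Sum>S\<in>{S. S \<subseteq> {1..n} \<and> card S = k}. F k)"
      by (rule sum.cong) auto
    also have "\<dots> = of_nat (n choose k) * F k"
      using n_subsets[of "{1..n}" k] by simp
    finally show "(\<Sum>S\<in>{S. S \<in> Pow {1..n} \<and> card S = k}. F (card S)) = of_nat (n choose k) * F k" .
  qed simp
  finally show ?thesis .
qed



definition AA :: "nat \<Rightarrow> (nat list \<times> nat list) set" where
  "AA n = {(a, b). distinct a \<and> distinct b \<and> set a \<inter> set b = {} \<and> set a \<union> set b = {1..n} \<and> ballot a \<and> ballot b}"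

definition Ad :: "nat \<Rightarrow> (nat list \<times> nat list) set" where
  "Ad n = {ab \<in> AA n. fst ab = [] \<or> (snd ab \<noteq> [] \<and> hd (snd ab) < hd (fst ab))}"

definition Aa :: "nat \<Rightarrow> (nat list \<times> nat list) set" where
  "Aa n = {ab \<in> AA n. fst ab \<noteq> [] \<and> (snd ab = [] \<or> hd (fst ab) < hd (snd ab))}"

definition cat :: "nat list \<times> nat list \<Rightarrow> nat list" where
  "cat ab = rev (fst ab) @ snd ab"

definition Bc :: "nat list \<Rightarrow> nat \<Rightarrow> bool" where
  "Bc p j \<longleftrightarrow> (\<forall>i<j. H p (j - 1) \<le> H p i) \<and> (\<forall>i. j \<le> i \<and> i < length p \<longrightarrow> H p j \<le> H p i)"

lemma pairAA:
  assumes p: "p \<in> permutations_of_set {1..n}" and j: "j \<le> length p"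
  shows "(rev (take j p), drop j p) \<in> AA n \<longleftrightarrow> Bc p j"
proof -
  have d: "distinct p" and s: "set p = {1..n}" using p by (auto simp: permutations_of_set_def)
  have d2: "distinct (take j p) \<and> distinct (drop j p) \<and> set (take j p) \<inter> set (drop j p) = {}"
    using d distinct_append[of "take j p" "drop j p"] by simp
  have u: "set (take j p) \<union> set (drop j p) = {1..n}"
    using s set_append[of "take j p" "drop j p"] by simp
  have bd: "ballot (drop j p) \<longleftrightarrow> (\<forall>i. j \<le> i \<and> i < length p \<longrightarrow> H p j \<le> H p i)"
  proof (cases "j < length p")
    case True then show ?thesis by (rule ballot_drop)
  next
    case False then show ?thesis by (auto simp: ballot_def asc_def des_def)
  qed
  show ?thesis unfolding AA_def Bc_def using d2 u bd ballot_rev_take[OF j] by auto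
qed

lemma AA_split:
  assumes "(a, b) \<in> AA n"
  shows "cat (a, b) \<in> permutations_of_set {1..n}" "length a \<le> length (cat (a, b))"
    "rev (take (length a) (cat (a, b))) = a" "drop (length a) (cat (a, b)) = b"
  using assms by (auto simp: AA_def cat_def permutations_of_set_def)

lemma H_step:
  assumes "distinct p" "Suc k < length p"
  shows "(p ! k < p ! Suc k \<and> H p (Suc k) = H p k + 1) \<or> (p ! Suc k < p ! k \<and> H p (Suc k) = H p k - 1)"
  using stp_distinct[of p k] assms by (auto simp: H_Suc stp_def split: if_splits)

lemma uniq_d:
  assumes d: "distinct p" and j: "j1 < j2" "j2 \<le> length p"
    and c1: "Bc p j1" and c2: "Bc p j2" and h2: "j2 = 0 \<or> (j2 < length p \<and> p ! j2 < p ! (j2 - 1))"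
  shows False
proof -
  have j2: "j2 < length p" "p ! j2 < p ! (j2 - 1)" using h2 j by auto
  have e: "Suc (j2 - 1) = j2" using j by simp
  have "H p j2 = H p (j2 - 1) - 1" using H_step[OF d, of "j2 - 1"] j2 e by auto
  moreover have "H p (j2 - 1) \<le> H p j1" using c2 j unfolding Bc_def by auto
  moreover have "H p j1 \<le> H p j2" using c1 j j2 unfolding Bc_def by auto
  ultimately show False by simp
qed

lemma uniq_a:
  assumes d: "distinct p" and j: "j1 < j2" "j2 \<le> length p"
    and c1: "Bc p j1" and c2: "Bc p j2" and h1: "0 < j1 \<and> (j1 = length p \<or> p ! (j1 - 1) < p ! j1)"
  shows False
proof -
  have j1: "j1 < length p" "p ! (j1 - 1) < p ! j1" "0 < j1" using h1 j by auto
  have e: "Suc (j1 - 1) = j1" using j1 by simp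
  have "H p j1 = H p (j1 - 1) + 1" using H_step[OF d, of "j1 - 1"] j1 e by auto
  moreover have "H p (j2 - 1) \<le> H p (j1 - 1)" using c2 j j1 unfolding Bc_def by auto
  moreover have "j1 \<le> j2 - 1 \<and> j2 - 1 < length p" using j by auto
  then have "H p j1 \<le> H p (j2 - 1)" using c1 unfolding Bc_def by blast
  ultimately show False by simp
qed

lemma Ad_char:
  assumes "(a, b) \<in> AA n"
  shows "(a, b) \<in> Ad n \<longleftrightarrow> (length a = 0 \<or> (length a < length (cat (a,b)) \<and> cat (a,b) ! length a < cat (a,b) ! (length a - 1)))"
  using assms by (cases a; cases b) (auto simp: Ad_def cat_def nth_append)

lemma Aa_char:
  assumes "(a, b) \<in> AA n"
  shows "(a, b) \<in> Aa n \<longleftrightarrow> (0 < length a \<and> (length a = length (cat (a,b)) \<or> cat (a,b) ! (length a - 1) < cat (a,b) ! length a))"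
  using assms by (cases a; cases b) (auto simp: Aa_def cat_def nth_append)


lemma min_exists:
  assumes "p \<noteq> []"
  obtains m where "\<forall>i<length p. m \<le> H p i" "\<exists>i<length p. H p i = m"
proof -
  define m where "m = Min (H p ` {..<length p})"
  have "finite (H p ` {..<length p})" "H p ` {..<length p} \<noteq> {}" using assms by auto
  then have "\<forall>i<length p. m \<le> H p i" "m \<in> H p ` {..<length p}"
    unfolding m_def using Min_le Min_in by auto
  then show ?thesis using that by auto
qed

lemma exist_d:
  assumes d: "distinct p"
  shows "\<exists>j\<le>length p. Bc p j \<and> (j = 0 \<or> (j < length p \<and> p ! j < p ! (j - 1)))"
proof (cases "p = []")
  case True then show ?thesis by (auto simp: Bc_def)
next
  case False
  obtain m where m1: "\<forall>i<length p. m \<le> H p i" and m2: "\<exists>i<length p. H p i = m"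
    using min_exists[OF False] by blast
  define j where "j = (LEAST i. i < length p \<and> H p i = m)"
  have j1: "j < length p" "H p j = m" unfolding j_def using LeastI_ex[OF m2] by auto
  have j2: "H p i \<noteq> m" if "i < j" for i using not_less_Least[of i "\<lambda>i. i < length p \<and> H p i = m"] that j1
    unfolding j_def by auto
  show ?thesis
  proof (cases "j = 0")
    case True
    then show ?thesis using j1 m1 by (auto simp: Bc_def)
  next
    case False
    have e: "Suc (j - 1) = j" using False by simp
    have a: "H p (j - 1) \<ge> m" "H p (j - 1) \<noteq> m" using m1 j1 j2[of "j - 1"] False by auto
    have st: "p ! j < p ! (j - 1) \<and> H p (j - 1) = m + 1"
      using H_step[OF d, of "j - 1"] e j1 a by auto
    have "Bc p j" unfolding Bc_def
    proof (intro conjI allI impI)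
      fix i assume i: "i < j"
      then have "i < length p" using j1 by simp
      then have "H p i \<noteq> m" "m \<le> H p i" using j2[OF i] m1 by auto
      then show "H p (j - 1) \<le> H p i" using st by linarith
    next
      fix i assume "j \<le> i \<and> i < length p" then show "H p j \<le> H p i" using m1 j1 by auto
    qed
    then show ?thesis using st j1 by (intro exI[of _ j]) auto
  qed
qed

lemma exist_a:
  assumes d: "distinct p" and ne: "p \<noteq> []"
  shows "\<exists>j\<le>length p. Bc p j \<and> 0 < j \<and> (j = length p \<or> p ! (j - 1) < p ! j)"
proof -
  obtain m where m1: "\<forall>i<length p. m \<le> H p i" and m2: "\<exists>i<length p. H p i = m"
    using min_exists[OF ne] by blast
  define M where "M = {i. i < length p \<and> H p i = m}"
  have fM: "finite M" "M \<noteq> {}" using m2 unfolding M_def by auto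
  define g where "g = Max M"
  have g1: "g < length p" "H p g = m" using Max_in[OF fM] unfolding g_def M_def by auto
  have g2: "H p i \<noteq> m" if "g < i" "i < length p" for i
  proof
    assume "H p i = m"
    then have "i \<in> M" using that unfolding M_def by simp
    then have "i \<le> g" using Max_ge[OF fM(1)] unfolding g_def by simp
    then show False using that by simp
  qed
  define j where "j = Suc g"
  show ?thesis
  proof (cases "j = length p")
    case True
    have jg: "j - 1 = g" unfolding j_def by simp
    have "Bc p j" unfolding Bc_def
    proof (intro conjI allI impI)
      fix i assume "i < j" then show "H p (j - 1) \<le> H p i" unfolding jg using g1 m1 True by auto
    next
      fix i assume "j \<le> i \<and> i < length p" then show "H p j \<le> H p i" using True by auto
    qed
    then show ?thesis using True unfolding j_def by auto
  next
    case False
    then have jl: "j < length p" using g1 unfolding j_def by simp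
    have a: "H p j \<ge> m" "H p j \<noteq> m" using m1 jl g2[of j] unfolding j_def by auto
    have st: "p ! g < p ! j \<and> H p j = m + 1"
      using H_step[OF d, of g] jl g1 a unfolding j_def by auto
    have "Bc p j" unfolding Bc_def
    proof (intro conjI allI impI)
      fix i assume "i < j" then show "H p (j - 1) \<le> H p i" using m1 g1 jl unfolding j_def by auto
    next
      fix i assume i: "j \<le> i \<and> i < length p"
      then have "H p i \<noteq> m" using g2[of i] unfolding j_def by auto
      then show "H p j \<le> H p i" using m1 i st by force
    qed
    then show ?thesis using st jl unfolding j_def by (intro exI[of _ "Suc g"]) auto
  qed
qed

lemma bij_Ad: "bij_betw cat (Ad n) (permutations_of_set {1..n})"
  unfolding bij_betw_def
proof
  show "inj_on cat (Ad n)"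
  proof (rule inj_onI)
    fix x y assume x: "x \<in> Ad n" and y: "y \<in> Ad n" and e: "cat x = cat y"
    obtain a1 b1 where x1: "x = (a1, b1)" by (cases x)
    obtain a2 b2 where y1: "y = (a2, b2)" by (cases y)
    have A1: "(a1, b1) \<in> AA n" and A2: "(a2, b2) \<in> AA n" using x y x1 y1 by (auto simp: Ad_def)
    define p where "p = cat (a1, b1)"
    have p2: "p = cat (a2, b2)" using e x1 y1 p_def by simp
    note s1 = AA_split[OF A1, folded p_def] and s2 = AA_split[OF A2, folded p2]
    have d: "distinct p" using s1(1) by (auto simp: permutations_of_set_def)
    have B1: "Bc p (length a1)" using pairAA[OF s1(1) s1(2)] A1 s1(3,4) by simp
    have B2: "Bc p (length a2)" using pairAA[OF s2(1) s2(2)] A2 s2(3,4) by simp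
    have C1: "length a1 = 0 \<or> (length a1 < length p \<and> p ! length a1 < p ! (length a1 - 1))"
      using Ad_char[OF A1] x x1 p_def by simp
    have C2: "length a2 = 0 \<or> (length a2 < length p \<and> p ! length a2 < p ! (length a2 - 1))"
      using Ad_char[OF A2] y y1 p2 by simp
    have "\<not> length a1 < length a2" using uniq_d[OF d _ s2(2) B1 B2 C2] by blast
    moreover have "\<not> length a2 < length a1" using uniq_d[OF d _ s1(2) B2 B1 C1] by blast
    ultimately have "length a1 = length a2" by simp
    then show "x = y" using s1(3,4) s2(3,4) x1 y1 by metis
  qed
next
  show "cat ` Ad n = permutations_of_set {1..n}"
  proof
    show "cat ` Ad n \<subseteq> permutations_of_set {1..n}"
      using AA_split(1) by (auto simp: Ad_def)
  next
    show "permutations_of_set {1..n} \<subseteq> cat ` Ad n"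
    proof
      fix p assume p: "p \<in> permutations_of_set {1..n}"
      then have d: "distinct p" by (auto simp: permutations_of_set_def)
      obtain j where j: "j \<le> length p" "Bc p j" "j = 0 \<or> (j < length p \<and> p ! j < p ! (j - 1))"
        using exist_d[OF d] by blast
      have A: "(rev (take j p), drop j p) \<in> AA n" using pairAA[OF p j(1)] j(2) by simp
      have c: "cat (rev (take j p), drop j p) = p" by (simp add: cat_def)
      have len: "length (rev (take j p)) = j" using j(1) by simp
      have "(rev (take j p), drop j p) \<in> Ad n" using Ad_char[OF A, unfolded len c] j by simp
      then show "p \<in> cat ` Ad n" using c by force
    qed
  qed
qed

lemma bij_Aa: "0 < n \<Longrightarrow> bij_betw cat (Aa n) (permutations_of_set {1..n})"
  unfolding bij_betw_def
proof
  show "inj_on cat (Aa n)"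
  proof (rule inj_onI)
    fix x y assume x: "x \<in> Aa n" and y: "y \<in> Aa n" and e: "cat x = cat y"
    obtain a1 b1 where x1: "x = (a1, b1)" by (cases x)
    obtain a2 b2 where y1: "y = (a2, b2)" by (cases y)
    have A1: "(a1, b1) \<in> AA n" and A2: "(a2, b2) \<in> AA n" using x y x1 y1 by (auto simp: Aa_def)
    define p where "p = cat (a1, b1)"
    have p2: "p = cat (a2, b2)" using e x1 y1 p_def by simp
    note s1 = AA_split[OF A1, folded p_def] and s2 = AA_split[OF A2, folded p2]
    have d: "distinct p" using s1(1) by (auto simp: permutations_of_set_def)
    have B1: "Bc p (length a1)" using pairAA[OF s1(1) s1(2)] A1 s1(3,4) by simp
    have B2: "Bc p (length a2)" using pairAA[OF s2(1) s2(2)] A2 s2(3,4) by simp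
    have C1: "0 < length a1 \<and> (length a1 = length p \<or> p ! (length a1 - 1) < p ! length a1)"
      using Aa_char[OF A1] x x1 p_def by simp
    have C2: "0 < length a2 \<and> (length a2 = length p \<or> p ! (length a2 - 1) < p ! length a2)"
      using Aa_char[OF A2] y y1 p2 by simp
    have "\<not> length a1 < length a2" using uniq_a[OF d _ s2(2) B1 B2 C1] by blast
    moreover have "\<not> length a2 < length a1" using uniq_a[OF d _ s1(2) B2 B1 C2] by blast
    ultimately have "length a1 = length a2" by simp
    then show "x = y" using s1(3,4) s2(3,4) x1 y1 by metis
  qed
next
  assume n: "0 < n"
  show "cat ` Aa n = permutations_of_set {1..n}"
  proof
    show "cat ` Aa n \<subseteq> permutations_of_set {1..n}"
      using AA_split(1) by (auto simp: Aa_def)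
  next
    show "permutations_of_set {1..n} \<subseteq> cat ` Aa n"
    proof
      fix p assume p: "p \<in> permutations_of_set {1..n}"
      then have d: "distinct p" and ne: "p \<noteq> []" using n by (auto simp: permutations_of_set_def)
      obtain j where j: "j \<le> length p" "Bc p j" "0 < j \<and> (j = length p \<or> p ! (j - 1) < p ! j)"
        using exist_a[OF d ne] by blast
      have A: "(rev (take j p), drop j p) \<in> AA n" using pairAA[OF p j(1)] j(2) by simp
      have c: "cat (rev (take j p), drop j p) = p" by (simp add: cat_def)
      have len: "length (rev (take j p)) = j" using j(1) by simp
      have "(rev (take j p), drop j p) \<in> Aa n" using Aa_char[OF A, unfolded len c] j by simp
      then show "p \<in> cat ` Aa n" using c by force
    qed
  qed
qed



lemma ballot_first: "ballot p \<Longrightarrow> distinct p \<Longrightarrow> 2 \<le> length p \<Longrightarrow> p ! 0 < p ! 1"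
proof -
  assume b: "ballot p" and d: "distinct p" and l: "2 \<le> length p"
  have "0 \<le> H p 1" using b l unfolding ballot_iff_H by auto
  then have "0 \<le> stp p 0" by (simp add: H_def)
  moreover have "p ! 0 \<noteq> p ! 1"
  proof -
    have "0 < length p" "1 < length p" using l by auto
    then show ?thesis using nth_eq_iff_index_eq[OF d] by fastforce
  qed
  ultimately show ?thesis by (auto simp: stp_def split: if_splits)
qed

lemma des_Nil[simp]: "des [] = 0" by (simp add: des_def)
lemma pk_Nil[simp]: "pk [] = 0" by (simp add: pk_def)

definition W :: "real \<Rightarrow> real \<Rightarrow> nat list \<times> nat list \<Rightarrow> real" where
  "W y t ab = (t ^ length (fst ab) * (1 / t) ^ des (fst ab) * y ^ pk (fst ab)) * (y ^ pk (snd ab) * t ^ des (snd ab))"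

definition V :: "real \<Rightarrow> real \<Rightarrow> nat list \<Rightarrow> real" where
  "V y t p = y ^ pk p * t ^ des p"

lemma pk_cat:
  assumes "(a, b) \<in> AA n"
  shows "pk (cat (a, b)) = pk a + pk b"
proof -
  have da: "distinct a" "ballot a" "distinct b" "ballot b" using assms by (auto simp: AA_def)
  have 1: "\<not> (2 \<le> length (rev a) \<and> b \<noteq> [] \<and> rev a ! (length (rev a) - 2) < last (rev a) \<and> hd b < last (rev a))"
  proof
    assume h: "2 \<le> length (rev a) \<and> b \<noteq> [] \<and> rev a ! (length (rev a) - 2) < last (rev a) \<and> hd b < last (rev a)"
    then have l: "2 \<le> length a" by simp
    have "rev a ! (length (rev a) - 2) = a ! 1" using l by (simp add: rev_nth)
    moreover have "last (rev a) = a ! 0"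
    proof -
      have "a \<noteq> []" using l by auto
      then show ?thesis by (simp add: last_rev hd_conv_nth)
    qed
    ultimately show False using h ballot_first[OF da(2) da(1) l] by simp
  qed
  have 2: "\<not> (rev a \<noteq> [] \<and> 2 \<le> length b \<and> last (rev a) < hd b \<and> b ! 1 < hd b)"
  proof
    assume h: "rev a \<noteq> [] \<and> 2 \<le> length b \<and> last (rev a) < hd b \<and> b ! 1 < hd b"
    then have "b ! 0 < b ! 1" using ballot_first[OF da(4) da(3)] by simp
    moreover have "b \<noteq> []" using h by auto
    ultimately show False using h by (simp add: hd_conv_nth)
  qed
  show ?thesis unfolding cat_def pk_eq fst_conv snd_conv pkr_append
    using 1 2 by (simp add: pkr_rev)
qed

lemma des_cat:
  "des (cat (a, b)) = asc a + des b + (if a \<noteq> [] \<and> b \<noteq> [] \<and> hd b < hd a then 1 else 0)"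
  unfolding cat_def des_eq asc_eq fst_conv snd_conv desr_append desr_rev
  by (simp add: last_rev)

lemma W_len:
  fixes t :: real
  assumes t: "t \<noteq> 0" and "(a, b) \<in> AA n" and "a \<noteq> []"
  shows "t ^ length a * (1 / t) ^ des a = t ^ (asc a + 1)"
proof -
  have "distinct a" using assms by (auto simp: AA_def)
  then have "length a = asc a + des a + 1" using ascr_desr[of a] assms(3) by (simp add: asc_eq des_eq)
  moreover have "t ^ (asc a + des a + 1) = t ^ (asc a + 1) * t ^ des a"
    unfolding power_add by (simp only: mult_ac)
  ultimately have "t ^ length a * (1 / t) ^ des a = t ^ (asc a + 1) * (t ^ des a * (1 / t) ^ des a)"
    by (metis mult.assoc)
  also have "t ^ des a * (1 / t) ^ des a = 1"
    using t by (simp add: power_mult_distrib[symmetric])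
  finally show ?thesis by simp
qed

lemma W_Ad:
  assumes t: "t \<noteq> 0" and ab: "ab \<in> Ad n"
  shows "W y t ab = V y t (cat ab)"
proof -
  obtain a b where e: "ab = (a, b)" by (cases ab)
  have A: "(a, b) \<in> AA n" using ab e by (simp add: Ad_def)
  show ?thesis
  proof (cases "a = []")
    case True
    then show ?thesis using e by (simp add: W_def V_def cat_def)
  next
    case False
    then have h: "b \<noteq> [] \<and> hd b < hd a" using ab e by (simp add: Ad_def)
    have d: "des (cat (a, b)) = asc a + des b + 1" using des_cat[of a b] h False by simp
    have w: "W y t (a, b) = t ^ (asc a + 1) * y ^ pk a * (y ^ pk b * t ^ des b)"
      using e W_len[OF t A False] by (simp add: W_def)
    show ?thesis unfolding w e V_def d pk_cat[OF A] by (simp add: power_add mult_ac)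
  qed
qed

lemma W_Aa:
  assumes t: "t \<noteq> 0" and ab: "ab \<in> Aa n"
  shows "W y t ab = t * V y t (cat ab)"
proof -
  obtain a b where e: "ab = (a, b)" by (cases ab)
  have A: "(a, b) \<in> AA n" using ab e by (simp add: Aa_def)
  have ne: "a \<noteq> []" and h: "b = [] \<or> hd a < hd b" using ab e by (auto simp: Aa_def)
  have "\<not> (a \<noteq> [] \<and> b \<noteq> [] \<and> hd b < hd a)" using h by auto
  then have d: "des (cat (a, b)) = asc a + des b" using des_cat[of a b] by simp
  have w: "W y t (a, b) = t ^ (asc a + 1) * y ^ pk a * (y ^ pk b * t ^ des b)"
    using e W_len[OF t A ne] by (simp add: W_def)
  show ?thesis unfolding w e V_def d pk_cat[OF A] by (simp add: power_add mult_ac)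
qed

lemma AA_split_sets: "AA n = Ad n \<union> Aa n" "Ad n \<inter> Aa n = {}"
proof -
  show "AA n = Ad n \<union> Aa n"
  proof
    show "AA n \<subseteq> Ad n \<union> Aa n"
    proof
      fix ab assume ab: "ab \<in> AA n"
      obtain a b where e: "ab = (a, b)" by (cases ab)
      have "a \<noteq> [] \<Longrightarrow> b \<noteq> [] \<Longrightarrow> hd a \<noteq> hd b"
        using ab e by (auto simp: AA_def) (metis disjoint_iff hd_in_set)
      then show "ab \<in> Ad n \<union> Aa n" using ab e by (auto simp: Ad_def Aa_def)
    qed
  qed (auto simp: Ad_def Aa_def)
  show "Ad n \<inter> Aa n = {}" by (auto simp: Ad_def Aa_def)
qed

lemma finite_AA: "finite (AA n)"
proof -
  let ?L = "{xs. set xs \<subseteq> {1..n} \<and> length xs \<le> n}"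
  have "AA n \<subseteq> ?L \<times> ?L"
  proof
    fix ab assume ab: "ab \<in> AA n"
    obtain a b where e: "ab = (a, b)" by (cases ab)
    have s: "set a \<subseteq> {1..n}" "set b \<subseteq> {1..n}" "distinct a" "distinct b" using ab e by (auto simp: AA_def)
    then have "length a \<le> n" "length b \<le> n"
      using card_mono[of "{1..n}" "set a"] card_mono[of "{1..n}" "set b"] distinct_card[of a] distinct_card[of b]
      by auto
    then show "ab \<in> ?L \<times> ?L" using e s by auto
  qed
  moreover have "finite ?L"
    by (rule finite_lists_length_le) simp
  ultimately show ?thesis by (meson finite_SigmaI finite_subset)
qed


definition bp :: "real \<Rightarrow> real \<Rightarrow> nat \<Rightarrow> real" where
  "bp y c k = (\<Sum>p\<in>ballot_perms k. y ^ pk p * c ^ des p)"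

lemma sum_AA:
  "(\<Sum>ab\<in>AA n. W y t ab) = (\<Sum>k\<le>n. of_nat (n choose k) * (t ^ k * bp y (1 / t) k * bp y t (n - k)))"
proof -
  let ?Sig = "SIGMA S:Pow {1..n}. Bal S \<times> Bal ({1..n} - S)"
  have img: "AA n = snd ` ?Sig"
  proof
    show "AA n \<subseteq> snd ` ?Sig"
    proof
      fix ab assume ab: "ab \<in> AA n"
      obtain a b where e: "ab = (a, b)" by (cases ab)
      have "set b = {1..n} - set a" using ab e by (auto simp: AA_def)
      then have "set a \<in> Pow {1..n}" "a \<in> Bal (set a)" "b \<in> Bal ({1..n} - set a)"
        using ab e by (auto simp: AA_def Bal_def permutations_of_set_def)
      then have "(set a, (a, b)) \<in> ?Sig" by simp
      then show "ab \<in> snd ` ?Sig" unfolding e by (rule rev_image_eqI) simp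
    qed
  next
    show "snd ` ?Sig \<subseteq> AA n"
      by (auto simp: AA_def Bal_def permutations_of_set_def)
  qed
  have inj: "inj_on snd ?Sig"
    by (rule inj_onI) (auto simp: Bal_def permutations_of_set_def)
  have fin: "finite ?Sig" by auto
  have "(\<Sum>ab\<in>AA n. W y t ab) = (\<Sum>x\<in>?Sig. W y t (snd x))"
    unfolding img by (simp only: sum.reindex[OF inj] comp_def)
  also have "\<dots> = (\<Sum>S\<in>Pow {1..n}. \<Sum>ab\<in>Bal S \<times> Bal ({1..n} - S). W y t ab)"
    by (subst sum.Sigma) (auto simp: case_prod_beta)
  also have "\<dots> = (\<Sum>S\<in>Pow {1..n}. (t ^ card S * bp y (1 / t) (card S)) * bp y t (n - card S))"
  proof (rule sum.cong)
    fix S assume S: "S \<in> Pow {1..n}"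
    then have fS: "finite S" by (auto intro: finite_subset)
    have cS: "card ({1..n} - S) = n - card S" using S by (auto simp: card_Diff_subset fS)
    have "(\<Sum>ab\<in>Bal S \<times> Bal ({1..n} - S). W y t ab)
        = (\<Sum>a\<in>Bal S. t ^ length a * (1 / t) ^ des a * y ^ pk a) * (\<Sum>b\<in>Bal ({1..n} - S). y ^ pk b * t ^ des b)"
      unfolding sum_product W_def by (simp add: sum.cartesian_product case_prod_beta)
    also have "(\<Sum>a\<in>Bal S. t ^ length a * (1 / t) ^ des a * y ^ pk a) = t ^ card S * (\<Sum>a\<in>Bal S. y ^ pk a * (1 / t) ^ des a)"
      unfolding sum_distrib_left
      by (rule sum.cong) (auto simp: Bal_def length_finite_permutations_of_set)
    also have "(\<Sum>a\<in>Bal S. y ^ pk a * (1 / t) ^ des a) = bp y (1 / t) (card S)"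
      unfolding bp_def using relabel[OF fS, of "\<lambda>k d. y ^ k * (1 / t) ^ d"] by simp
    also have "(\<Sum>b\<in>Bal ({1..n} - S). y ^ pk b * t ^ des b) = bp y t (n - card S)"
      unfolding bp_def using relabel[of "{1..n} - S" "\<lambda>k d. y ^ k * t ^ d"] cS by simp
    finally show "(\<Sum>ab\<in>Bal S \<times> Bal ({1..n} - S). W y t ab) = (t ^ card S * bp y (1 / t) (card S)) * bp y t (n - card S)" .
  qed simp
  also have "\<dots> = (\<Sum>k\<le>n. of_nat (n choose k) * (t ^ k * bp y (1 / t) k * bp y t (n - k)))"
    using sum_Pow_card[of "\<lambda>k. t ^ k * bp y (1 / t) k * bp y t (n - k)" n] by simp
  finally show ?thesis .
qed

lemma sum_AA2:
  assumes t: "t \<noteq> 0"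
  shows "(\<Sum>ab\<in>AA n. W y t ab) = (1 + t) * (\<Sum>p\<in>permutations_of_set {1..n}. V y t p) - (if n = 0 then t else 0)"
proof -
  have fd: "finite (Ad n)" "finite (Aa n)" using finite_AA[of n] AA_split_sets(1)[of n] by auto
  have "(\<Sum>ab\<in>AA n. W y t ab) = (\<Sum>ab\<in>Ad n. W y t ab) + (\<Sum>ab\<in>Aa n. W y t ab)"
    unfolding AA_split_sets(1) by (rule sum.union_disjoint[OF fd AA_split_sets(2)])
  also have "(\<Sum>ab\<in>Ad n. W y t ab) = (\<Sum>ab\<in>Ad n. V y t (cat ab))"
    by (rule sum.cong) (auto simp: W_Ad[OF t])
  also have "\<dots> = (\<Sum>p\<in>permutations_of_set {1..n}. V y t p)"
    by (rule sum.reindex_bij_betw[OF bij_Ad])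
  also have "(\<Sum>ab\<in>Aa n. W y t ab) = (\<Sum>ab\<in>Aa n. t * V y t (cat ab))"
    by (rule sum.cong) (auto simp: W_Aa[OF t])
  also have "\<dots> = t * (\<Sum>p\<in>permutations_of_set {1..n}. V y t p) - (if n = 0 then t else 0)"
  proof (cases "n = 0")
    case True
    have "Aa 0 = {}" by (auto simp: Aa_def AA_def)
    then show ?thesis using True by (simp add: V_def)
  next
    case False
    then show ?thesis
      using sum.reindex_bij_betw[OF bij_Aa, of n "\<lambda>p. t * V y t p"] by (simp add: sum_distrib_left)
  qed
  finally show ?thesis by (simp add: algebra_simps)
qed

theorem theorem3p3:
  fixes y t :: real
  assumes "t \<noteq> 0"
  shows "(Bgf y (1 / t) oo (fps_const t * fps_X)) * Bgf y t
           = fps_const (1 + t) * Pgf y t - fps_const t"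
proof (rule fps_ext)
  fix n
  have B: "fps_nth (Bgf y c) k = bp y c k / fact k" for c k by (simp add: Bgf_def bp_def)
  have "fps_nth ((Bgf y (1 / t) oo (fps_const t * fps_X)) * Bgf y t) n
      = (\<Sum>i=0..n. (t ^ i * (bp y (1 / t) i / fact i)) * (bp y t (n - i) / fact (n - i)))"
    by (simp add: fps_mult_nth B)
  also have "\<dots> = (\<Sum>i\<le>n. of_nat (n choose i) * (t ^ i * bp y (1 / t) i * bp y t (n - i))) / fact n"
    unfolding sum_divide_distrib atMost_atLeast0
  proof (rule sum.cong)
    fix i assume "i \<in> {0..n}"
    then have i: "i \<le> n" by simp
    have f: "(fact i :: real) \<noteq> 0" "(fact (n - i) :: real) \<noteq> 0" "(fact n :: real) \<noteq> 0" by simp_all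
    show "(t ^ i * (bp y (1 / t) i / fact i)) * (bp y t (n - i) / fact (n - i))
        = of_nat (n choose i) * (t ^ i * bp y (1 / t) i * bp y t (n - i)) / fact n"
      unfolding binomial_fact[OF i] using f by (simp add: field_simps)
  qed simp
  also have "\<dots> = ((1 + t) * (\<Sum>p\<in>permutations_of_set {1..n}. V y t p) - (if n = 0 then t else 0)) / fact n"
    using sum_AA[where n=n and y=y and t=t] sum_AA2[OF assms, where n=n and y=y] by simp
  also have "\<dots> = fps_nth (fps_const (1 + t) * Pgf y t - fps_const t) n"
  proof -
    have P: "fps_nth (Pgf y t) n = (\<Sum>p\<in>permutations_of_set {1..n}. V y t p) / fact n"
      by (simp add: Pgf_def V_def)
    show ?thesis
    proof (cases "n = 0")
      case True then show ?thesis using P by simp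
    next
      case False then show ?thesis using P by (simp add: diff_divide_distrib)
    qed
  qed
  finally show "fps_nth ((Bgf y (1 / t) oo (fps_const t * fps_X)) * Bgf y t) n = fps_nth (fps_const (1 + t) * Pgf y t - fps_const t) n" .
qed

end
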